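(* Let $L$ be an $n\times n$ nonsingular M-matrix with integer entries, and let $\phi_1,\dots,\phi_n:\mathbb{R}\to\mathbb{R}$ be non-negative strictly increasing functions. Define $E_\phi(q)=\sum_{i=1}^n\phi_i((L^{-1}q)_i)$ for $q\in\mathbb{Z}^n$. For every $f\in\mathbb{Z}^n$ with $f\ge0$, the problem $\min_{g\sim f,\ g\ge0}E_\phi(g)$ (over $g\in\mathbb{Z}^n$) has a unique solution.
   Context: A Z-matrix is a square real matrix whose off-diagonal entries are all $\le 0$. A nonsingular M-matrix is a Z-matrix $L$ that is invertible with $L^{-1}$ having all entries nonnegative. Vector inequalities are entrywise. For $f,g\in\mathbb{Z}^n$, $f\sim g$ means $g-f=Lz$ for some $z\in\mathbb{Z}^n$. *)

theory Defs
  imports "HOL-Analysis.Analysis"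
begin

definition Z_matrix :: "real^'n^'n \<Rightarrow> bool" where
  "Z_matrix A \<longleftrightarrow> (\<forall>i j. i \<noteq> j \<longrightarrow> A $ i $ j \<le> 0)"

definition nonsingular_M_matrix :: "real^'n^'n \<Rightarrow> bool" where
  "nonsingular_M_matrix A \<longleftrightarrow>
     Z_matrix A \<and> invertible A \<and> (\<forall>i j. matrix_inv A $ i $ j \<ge> 0)"

definition real_mat :: "int^'n^'n \<Rightarrow> real^'n^'n" where
  "real_mat L = (\<chi> i j. real_of_int (L $ i $ j))"

definition real_vec :: "int^'n \<Rightarrow> real^'n" where
  "real_vec q = (\<chi> i. real_of_int (q $ i))"

definition equiv_L :: "int^'n^'n \<Rightarrow> int^'n \<Rightarrow> int^'n \<Rightarrow> bool" where
  "equiv_L L f g \<longleftrightarrow> (\<exists>z :: int^'n. g - f = L *v z)"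

definition E_phi :: "int^'n^'n \<Rightarrow> ('n \<Rightarrow> real \<Rightarrow> real) \<Rightarrow> int^'n \<Rightarrow> real" where
  "E_phi L \<phi> q = (\<Sum>i\<in>UNIV. \<phi> i ((matrix_inv (real_mat L) *v real_vec q) $ i))"

end

theory Submission
  imports Defs
begin

lemma matrix_inv_left:
  assumes "invertible (A::'a::semiring_1^'n^'m)"
  shows "matrix_inv A ** A = mat 1"
proof -
  have "\<exists>A'::'a^'m^'n. A ** A' = mat 1 \<and> A' ** A = mat 1" using assms by (simp add: invertible_def)
  then show ?thesis unfolding matrix_inv_def by (rule someI2_ex) auto
qed

lemma real_vec_affine:
  "real_vec (f + L *v w) = real_vec f + real_mat L *v real_vec w"
  by (simp add: vec_eq_iff real_vec_def real_mat_def matrix_vector_mult_def of_int_sum)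

lemma E_phi_affine:
  assumes "invertible (real_mat L)"
  shows "E_phi L \<phi> (f + L *v w) =
    (\<Sum>i\<in>UNIV. \<phi> i ((matrix_inv (real_mat L) *v real_vec f) $ i + real_of_int (w $ i)))"
proof -
  have "matrix_inv (real_mat L) *v real_vec (f + L *v w)
        = matrix_inv (real_mat L) *v real_vec f + real_vec w"
    using matrix_inv_left[OF assms]
    by (simp add: real_vec_affine matrix_vector_right_distrib matrix_vector_mul_assoc)
  then show ?thesis unfolding E_phi_def by (simp add: real_vec_def)
qed

lemma min_closed:
  fixes L :: "int^'n^'n"
  assumes Z: "\<And>i j. i \<noteq> j \<Longrightarrow> L $ i $ j \<le> 0"
    and z: "\<forall>i. (f + L *v z) $ i \<ge> 0" and w: "\<forall>i. (f + L *v w) $ i \<ge> 0"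
  shows "\<forall>i. (f + L *v (\<chi> k. min (z$k) (w$k))) $ i \<ge> 0"
proof
  fix i
  let ?m = "\<chi> k. min (z$k) (w$k)"
  show "(f + L *v ?m) $ i \<ge> 0"
  proof (cases "z$i \<le> w$i")
    case True
    have "(\<Sum>j\<in>UNIV. L$i$j * z$j) \<le> (\<Sum>j\<in>UNIV. L$i$j * ?m$j)"
    proof (rule sum_mono)
      fix j
      show "L$i$j * z$j \<le> L$i$j * ?m$j"
      proof (cases "j = i")
        case True thus ?thesis using \<open>z$i \<le> w$i\<close> by simp
      next
        case False
        then have "L$i$j \<le> 0" using Z by auto
        moreover have "?m$j \<le> z$j" by simp
        ultimately show ?thesis by (simp add: mult_left_mono_neg)
      qed
    qed
    then show ?thesis using z[rule_format, of i] by (simp add: matrix_vector_mult_def)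
  next
    case False
    have "(\<Sum>j\<in>UNIV. L$i$j * w$j) \<le> (\<Sum>j\<in>UNIV. L$i$j * ?m$j)"
    proof (rule sum_mono)
      fix j
      show "L$i$j * w$j \<le> L$i$j * ?m$j"
      proof (cases "j = i")
        case True thus ?thesis using False by simp
      next
        case False
        then have "L$i$j \<le> 0" using Z by auto
        moreover have "?m$j \<le> w$j" by simp
        ultimately show ?thesis by (simp add: mult_left_mono_neg)
      qed
    qed
    then show ?thesis using w[rule_format, of i] by (simp add: matrix_vector_mult_def)
  qed
qed

theorem mainTheorem14:
  fixes L :: "int^'n^'n" and \<phi> :: "'n \<Rightarrow> real \<Rightarrow> real" and f :: "int^'n"
  assumes "nonsingular_M_matrix (real_mat L)"
    and "\<And>i x. \<phi> i x \<ge> 0"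
    and "\<And>i. strict_mono (\<phi> i)"
    and "\<And>i. f $ i \<ge> 0"
  shows "\<exists>!g :: int^'n. equiv_L L f g \<and> (\<forall>i. g $ i \<ge> 0) \<and>
           (\<forall>h :: int^'n. equiv_L L f h \<and> (\<forall>i. h $ i \<ge> 0) \<longrightarrow> E_phi L \<phi> g \<le> E_phi L \<phi> h)"
proof -
  define M where "M = real_mat L"
  define Li where "Li = matrix_inv M"
  define c where "c = Li *v real_vec f"
  define P where "P = (\<lambda>z::int^'n. \<forall>i. (f + L *v z) $ i \<ge> 0)"
  have inv: "invertible M" and Linv: "\<And>i j. Li $ i $ j \<ge> 0" and ZM: "Z_matrix M"
    using assms(1) unfolding nonsingular_M_matrix_def M_def Li_def by auto
  have Z: "\<And>i j. i \<noteq> j \<Longrightarrow> L $ i $ j \<le> 0"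
    using ZM unfolding Z_matrix_def M_def real_mat_def by auto
  have E: "\<And>w. E_phi L \<phi> (f + L *v w) = (\<Sum>i\<in>UNIV. \<phi> i (c $ i + real_of_int (w $ i)))"
    using E_phi_affine[OF inv[unfolded M_def]] unfolding c_def Li_def M_def by simp
  have lb: "\<And>z i. P z \<Longrightarrow> ceiling (- c $ i) \<le> z $ i"
  proof -
    fix z i assume "P z"
    have "Li *v real_vec (f + L *v z) = c + real_vec z"
      using matrix_inv_left[OF inv]
      by (simp add: c_def Li_def M_def real_vec_affine matrix_vector_right_distrib matrix_vector_mul_assoc)
    moreover have "(Li *v real_vec (f + L *v z)) $ i \<ge> 0"
    proof -
      have "\<And>x. real_vec (f + L *v z) $ x \<ge> 0" using \<open>P z\<close> unfolding P_def real_vec_def by (metis of_int_0_le_iff vec_lambda_beta)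
      then show ?thesis unfolding matrix_vector_mult_def using Linv
        by (auto intro!: sum_nonneg)
    qed
    ultimately have "0 \<le> c $ i + real_of_int (z $ i)" by (simp add: real_vec_def)
    then show "ceiling (- c $ i) \<le> z $ i" by (simp add: ceiling_le_iff)
  qed
  define B where "B = (\<Sum>i\<in>UNIV. ceiling (- c $ i))"
  have sB: "\<And>z. P z \<Longrightarrow> B \<le> sum (\<lambda>i. z $ i) UNIV"
    unfolding B_def by (rule sum_mono) (rule lb)
  have P0: "P 0" using assms(4) by (simp add: P_def)
  obtain zs where zs: "P zs" and zmin: "\<And>y. P y \<Longrightarrow> nat (sum (\<lambda>i. zs $ i) UNIV - B) \<le> nat (sum (\<lambda>i. y $ i) UNIV - B)"
    using ex_has_least_nat[of P 0 "\<lambda>z. nat (sum (\<lambda>i. z $ i) UNIV - B)"] P0 by blast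
  have least: "\<And>w i. P w \<Longrightarrow> zs $ i \<le> w $ i"
  proof -
    fix w i assume Pw: "P w"
    define m where "m = (\<chi> k. min (zs$k) (w$k))"
    have Pm: "P m" using min_closed[OF Z zs[unfolded P_def] Pw[unfolded P_def]] by (simp add: P_def m_def)
    have le: "\<And>k. m $ k \<le> zs $ k" by (simp add: m_def)
    have "sum (\<lambda>i. zs $ i) UNIV \<le> sum (\<lambda>i. m $ i) UNIV"
      using zmin[OF Pm] sB[OF Pm] sB[OF zs] by simp
    moreover have "sum (\<lambda>i. m $ i) UNIV \<le> sum (\<lambda>i. zs $ i) UNIV" by (rule sum_mono) (rule le)
    ultimately have "sum (\<lambda>i. zs $ i - m $ i) UNIV = 0" by (simp add: sum_subtractf)
    then have "\<forall>k\<in>UNIV. zs $ k - m $ k = 0"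
      using sum_nonneg_eq_0_iff[of UNIV "\<lambda>i. zs $ i - m $ i"] le by simp
    then have "zs $ i = m $ i" by simp
    then show "zs $ i \<le> w $ i" by (simp add: m_def)
  qed
  have equivD: "\<And>h. equiv_L L f h \<Longrightarrow> \<exists>w. h = f + L *v w"
    unfolding equiv_L_def by (metis add.commute diff_add_cancel)
  have Emono: "\<And>w. P w \<Longrightarrow> E_phi L \<phi> (f + L *v zs) \<le> E_phi L \<phi> (f + L *v w)"
    unfolding E
  proof (rule sum_mono)
    fix w i assume "P w"
    show "\<phi> i (c $ i + real_of_int (zs $ i)) \<le> \<phi> i (c $ i + real_of_int (w $ i))"
      using least[OF \<open>P w\<close>, of i] strict_mono_less_eq[OF assms(3)[of i]] by simp
  qed
  show ?thesis
  proof (rule ex1I[of _ "f + L *v zs"])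
    show "equiv_L L f (f + L *v zs) \<and> (\<forall>i. 0 \<le> (f + L *v zs) $ i) \<and>
      (\<forall>h. equiv_L L f h \<and> (\<forall>i. 0 \<le> h $ i) \<longrightarrow> E_phi L \<phi> (f + L *v zs) \<le> E_phi L \<phi> h)"
    proof (intro conjI allI impI)
      show "equiv_L L f (f + L *v zs)" unfolding equiv_L_def by auto
      show "\<And>i. 0 \<le> (f + L *v zs) $ i" using zs by (simp add: P_def)
      fix h assume h: "equiv_L L f h \<and> (\<forall>i. 0 \<le> h $ i)"
      then obtain w where hw: "h = f + L *v w" using equivD by blast
      then have "P w" using h by (simp add: P_def)
      then show "E_phi L \<phi> (f + L *v zs) \<le> E_phi L \<phi> h" using Emono hw by simp
    qed
  next
    fix g assume g: "equiv_L L f g \<and> (\<forall>i. 0 \<le> g $ i) \<and>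
      (\<forall>h. equiv_L L f h \<and> (\<forall>i. 0 \<le> h $ i) \<longrightarrow> E_phi L \<phi> g \<le> E_phi L \<phi> h)"
    then obtain w where gw: "g = f + L *v w" using equivD by blast
    then have Pw: "P w" using g by (simp add: P_def)
    have "E_phi L \<phi> g \<le> E_phi L \<phi> (f + L *v zs)"
    proof -
      have "equiv_L L f (f + L *v zs)" unfolding equiv_L_def by auto
      moreover have "\<forall>i. 0 \<le> (f + L *v zs) $ i" using zs by (simp add: P_def)
      ultimately show ?thesis using g by blast
    qed
    have "w = zs"
    proof (rule ccontr)
      assume "w \<noteq> zs"
      then obtain i where "w $ i \<noteq> zs $ i" by (auto simp: vec_eq_iff)
      then have lt: "zs $ i < w $ i" using least[OF Pw, of i] by simp
      have "(\<Sum>i\<in>UNIV. \<phi> i (c $ i + real_of_int (zs $ i))) < (\<Sum>i\<in>UNIV. \<phi> i (c $ i + real_of_int (w $ i)))"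
      proof (rule sum_strict_mono_ex1)
        show "finite (UNIV :: 'n set)" by simp
        show "\<forall>x\<in>UNIV. \<phi> x (c $ x + real_of_int (zs $ x)) \<le> \<phi> x (c $ x + real_of_int (w $ x))"
          using least[OF Pw] strict_mono_less_eq[OF assms(3)] by simp
        show "\<exists>a\<in>UNIV. \<phi> a (c $ a + real_of_int (zs $ a)) < \<phi> a (c $ a + real_of_int (w $ a))"
          using lt strict_mono_less[OF assms(3)[of i]] by (intro bexI[of _ i]) auto
      qed
      then show False using \<open>E_phi L \<phi> g \<le> E_phi L \<phi> (f + L *v zs)\<close> gw E by simp
    qed
    then show "g = f + L *v zs" using gw by simp
  qed
qed

end
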